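(* Let $\mathcal{X}=\langle P,K,V\rangle$ be a polyhedral model. For every cell $\tilde\sigma$ of $K$ and all $x,y\in\tilde\sigma$, $x\equiv y$, i.e. for every SLCS formula $\phi$, $\mathcal{X},x\models\phi\iff\mathcal{X},y\models\phi$. Consequently, for every formula $\phi$, $[\![\phi]\!]$ is a finite union of cells of $K$.
   Context: A $d$-simplex $\sigma\subseteq\mathbb{R}^m$ is the convex hull of $d+1$ affinely independent points $v_0,\dots,v_d$ (its vertices); the simplexes spanned by subsets of the vertices (including the empty simplex) are its faces, and $\tau\preceq\sigma$ means $\tau$ is a face of $\sigma$. The relative interior of $\sigma$ is $\tilde\sigma=\{\sum_i\lambda_iv_i:\lambda_i\in(0,1],\sum_i\lambda_i=1\}$. A simplicial complex $K$ is a finite set of simplexes of $\mathbb{R}^m$ closed under taking faces and such that the intersection of any two of its simplexes is a face of both. Its polyhedron is $|K|=\bigcup K$, with the subspace topology of $\mathbb{R}^m$; $\mathcal{C}$ and $\mathcal{I}$ denote closure and interior in this space. The cells of $K$ are the sets $\tilde\sigma$ for nonempty $\sigma\in K$; they form a partition $\tilde K$ of $|K|$. A path in a space $P$ is a continuous $\pi:[0,1]\to P$; $\pi(S)=\{\pi(s):s\in S\}$. Fix a finite set $AP$ of atomic propositions. A polyhedral model is $\mathcal{X}=\langle P,K,V\rangle$ with $K$ a simplicial complex, $P=|K|$, and $V:AP\to\mathcal{P}(P)$ such that each $V(p)$ is a union of cells of $K$ ($K$ is then called coherent with the model). SLCS formulas: $\phi::=\top\mid p\mid\neg\phi\mid\phi\wedge\phi\mid\Box\phi\mid\gamma(\phi,\phi)$,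 $p\in AP$. Semantics at $x\in P$, with $[\![\phi]\!]=\{x\in P:\mathcal{X},x\models\phi\}$: $\top$ always holds; $x\models p$ iff $x\in V(p)$; Boolean connectives as usual; $x\models\Box\phi$ iff $x\in\mathcal{I}([\![\phi]\!])$; $x\models\gamma(\phi,\psi)$ iff there is a path $\pi$ in $P$ with $\pi(0)=x$, $\pi((0,1))\subseteq[\![\phi]\!]$ and $\pi(1)\in[\![\psi]\!]$. Logical equivalence $\equiv$ on $P$: $x\equiv y$ iff $x$ and $y$ satisfy exactly the same SLCS formulas. *)

theory Defs
  imports "HOL-Analysis.Analysis"
begin

definition is_simplex :: "'a::euclidean_space set \<Rightarrow> bool" where
  "is_simplex \<sigma> \<longleftrightarrow> (\<exists>V. finite V \<and> \<not> affine_dependent V \<and> \<sigma> = convex hull V)"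

definition face_of_simplex :: "'a::euclidean_space set \<Rightarrow> 'a set \<Rightarrow> bool" where
  "face_of_simplex \<tau> \<sigma> \<longleftrightarrow>
     (\<exists>V W. finite V \<and> \<not> affine_dependent V \<and> \<sigma> = convex hull V \<and>
            W \<subseteq> V \<and> \<tau> = convex hull W)"

definition simplex_relint :: "'a::euclidean_space set \<Rightarrow> 'a set" where
  "simplex_relint \<sigma> =
     {x. \<exists>V. finite V \<and> \<not> affine_dependent V \<and> \<sigma> = convex hull V \<and>
            (\<exists>l. (\<forall>v\<in>V. 0 < l v \<and> l v \<le> 1) \<and> sum l V = 1 \<and>
                 x = (\<Sum>v\<in>V. l v *\<^sub>R v))}"

definition simplicial_complex :: "'a::euclidean_space set set \<Rightarrow> bool" where
  "simplicial_complex K \<longleftrightarrow>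
     finite K \<and> (\<forall>\<sigma>\<in>K. is_simplex \<sigma>) \<and>
     (\<forall>\<sigma>\<in>K. \<forall>\<tau>. face_of_simplex \<tau> \<sigma> \<longrightarrow> \<tau> \<in> K) \<and>
     (\<forall>\<sigma>\<in>K. \<forall>\<tau>\<in>K. face_of_simplex (\<sigma> \<inter> \<tau>) \<sigma> \<and> face_of_simplex (\<sigma> \<inter> \<tau>) \<tau>)"

definition cells :: "'a::euclidean_space set set \<Rightarrow> 'a set set" where
  "cells K = {simplex_relint \<sigma> | \<sigma>. \<sigma> \<in> K \<and> \<sigma> \<noteq> {}}"

definition polyhedral_model ::
  "'a::euclidean_space set \<Rightarrow> 'a set set \<Rightarrow> ('p::finite \<Rightarrow> 'a set) \<Rightarrow> bool" where
  "polyhedral_model P K V \<longleftrightarrow>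
     simplicial_complex K \<and> P = \<Union>K \<and> (\<forall>p. \<exists>C. C \<subseteq> cells K \<and> V p = \<Union>C)"

datatype 'p slcs =
    STop
  | SAtom 'p
  | SNeg "'p slcs"
  | SAnd "'p slcs" "'p slcs"
  | SBox "'p slcs"
  | SGamma "'p slcs" "'p slcs"

fun sem :: "'a::euclidean_space set \<Rightarrow> ('p \<Rightarrow> 'a set) \<Rightarrow> 'p slcs \<Rightarrow> 'a set" where
  "sem P V STop = P"
| "sem P V (SAtom p) = P \<inter> V p"
| "sem P V (SNeg \<phi>) = P - sem P V \<phi>"
| "sem P V (SAnd \<phi> \<psi>) = sem P V \<phi> \<inter> sem P V \<psi>"
| "sem P V (SBox \<phi>) = (top_of_set P) interior_of (sem P V \<phi>)"
| "sem P V (SGamma \<phi> \<psi>) =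
     {x\<in>P. \<exists>\<pi>. path \<pi> \<and> path_image \<pi> \<subseteq> P \<and> pathstart \<pi> = x \<and>
              \<pi> ` {0<..<1} \<subseteq> sem P V \<phi> \<and> pathfinish \<pi> \<in> sem P V \<psi>}"

end

theory Submission
  imports Defs
begin

lemma relint_eq:
  assumes "is_simplex \<sigma>"
  shows "simplex_relint \<sigma> = rel_interior \<sigma>"
proof
  show "simplex_relint \<sigma> \<subseteq> rel_interior \<sigma>"
  proof
    fix x assume "x \<in> simplex_relint \<sigma>"
    then obtain W l where W: "finite W" "\<not> affine_dependent W" "\<sigma> = convex hull W"
      "\<forall>v\<in>W. 0 < l v" "sum l W = 1" "x = (\<Sum>v\<in>W. l v *\<^sub>R v)"
      unfolding simplex_relint_def by blast
    then show "x \<in> rel_interior \<sigma>"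
      by (subst W(3), subst rel_interior_convex_hull_explicit[OF W(2)]) blast
  qed
next
  show "rel_interior \<sigma> \<subseteq> simplex_relint \<sigma>"
  proof
    fix x assume x: "x \<in> rel_interior \<sigma>"
    obtain W where W: "finite W" "\<not> affine_dependent W" "\<sigma> = convex hull W"
      using assms unfolding is_simplex_def by blast
    then obtain l where l: "\<forall>v\<in>W. 0 < l v" "sum l W = 1" "x = (\<Sum>v\<in>W. l v *\<^sub>R v)"
      using x rel_interior_convex_hull_explicit[OF W(2)] by auto
    have "\<forall>v\<in>W. l v \<le> 1"
    proof
      fix v assume "v \<in> W"
      then have "l v \<le> sum l W" using l(1) W(1)
        by (intro member_le_sum) auto
      then show "l v \<le> 1" using l(2) by simp
    qed
    then show "x \<in> simplex_relint \<sigma>" unfolding simplex_relint_def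
      using W l by blast
  qed
qed

lemma simplex_props:
  assumes "is_simplex \<sigma>"
  shows "convex \<sigma>" "compact \<sigma>" "closed \<sigma>"
proof -
  obtain W where W: "finite W" "\<not> affine_dependent W" "\<sigma> = convex hull W"
    using assms unfolding is_simplex_def by blast
  show "convex \<sigma>" using W by simp
  show "compact \<sigma>" using W by (simp add: compact_convex_hull finite_imp_compact)
  then show "closed \<sigma>" by (rule compact_imp_closed)
qed

lemma cover:
  assumes K: "simplicial_complex K" and s: "\<sigma> \<in> K" and x: "x \<in> \<sigma>"
  shows "\<exists>\<tau>\<in>K. \<tau> \<noteq> {} \<and> x \<in> rel_interior \<tau>"
proof -
  obtain W where W: "finite W" "\<not> affine_dependent W" "\<sigma> = convex hull W"
    using K s unfolding simplicial_complex_def is_simplex_def by blast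
  obtain u where u: "\<forall>v\<in>W. 0 \<le> u v" "sum u W = 1" "(\<Sum>v\<in>W. u v *\<^sub>R v) = x"
    using x W convex_hull_finite[OF W(1)] by auto
  define W' where "W' = {v\<in>W. 0 < u v}"
  have sub: "W' \<subseteq> W" unfolding W'_def by auto
  have z: "\<forall>v\<in>W - W'. u v = 0" using u(1) unfolding W'_def by force
  have s1: "sum u W' = 1"
    using sum.mono_neutral_left[OF W(1) sub z] u(2) by simp
  have s2: "(\<Sum>v\<in>W'. u v *\<^sub>R v) = x"
    using sum.mono_neutral_left[OF W(1) sub, of "\<lambda>v. u v *\<^sub>R v"] z u(3) by simp
  have ind: "\<not> affine_dependent W'" using W(2) sub affine_dependent_subset by blast
  have xin: "x \<in> rel_interior (convex hull W')"
    using rel_interior_convex_hull_explicit[OF ind] s1 s2 unfolding W'_def by auto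
  have "face_of_simplex (convex hull W') \<sigma>"
    unfolding face_of_simplex_def using W sub by blast
  then have "convex hull W' \<in> K" using K s unfolding simplicial_complex_def by blast
  then show ?thesis using xin rel_interior_subset by blast
qed

lemma face_sub:
  assumes K: "simplicial_complex K" and s: "\<sigma> \<in> K" and t: "\<tau> \<in> K"
    and x: "x \<in> rel_interior \<sigma>" and xt: "x \<in> \<tau>"
  shows "\<sigma> \<subseteq> \<tau>"
proof -
  have "face_of_simplex (\<sigma> \<inter> \<tau>) \<sigma>" using K s t unfolding simplicial_complex_def by blast
  then obtain W W' where W: "finite W" "\<not> affine_dependent W" "\<sigma> = convex hull W"
    "W' \<subseteq> W" "\<sigma> \<inter> \<tau> = convex hull W'" unfolding face_of_simplex_def by blast
  have f: "(\<sigma> \<inter> \<tau>) face_of \<sigma>"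
    using face_of_convex_hull_affine_independent[OF W(2)] W by blast
  have "x \<in> \<sigma>" using x rel_interior_subset by blast
  then have "\<sigma> \<subseteq> \<sigma> \<inter> \<tau>" using subset_of_face_of[OF f _ ] x xt by blast
  then show ?thesis by blast
qed


lemma nbhd:
  assumes K: "simplicial_complex K" and P: "P = \<Union>K"
  and U_def: "U = - \<Union>{\<tau>\<in>K. x \<notin> \<tau>}"
  shows "open U" "x \<in> U" "\<And>z. z \<in> U \<Longrightarrow> z \<in> P \<Longrightarrow> \<exists>\<tau>\<in>K. \<tau> \<noteq> {} \<and> z \<in> rel_interior \<tau> \<and> x \<in> \<tau>"
proof -
  have fin: "finite K" using K unfolding simplicial_complex_def by blast
  have "closed (\<Union>{\<tau>\<in>K. x \<notin> \<tau>})"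
    using fin K simplex_props(3) unfolding simplicial_complex_def by (intro closed_Union) auto
  then show "open U" unfolding U_def by (simp add: open_Compl)
  show "x \<in> U" unfolding U_def by blast
  fix z assume z: "z \<in> U" "z \<in> P"
  then obtain \<sigma> where "\<sigma> \<in> K" "z \<in> \<sigma>" using P by blast
  then obtain \<tau> where t: "\<tau> \<in> K" "\<tau> \<noteq> {}" "z \<in> rel_interior \<tau>" using cover[OF K] by blast
  then have "z \<in> \<tau>" using rel_interior_subset by blast
  then have "x \<in> \<tau>" using z(1) t(1) unfolding U_def by blast
  then show "\<exists>\<tau>\<in>K. \<tau> \<noteq> {} \<and> z \<in> rel_interior \<tau> \<and> x \<in> \<tau>" using t by blast
qed

lemma interior_of_top_iff:
  "x \<in> (top_of_set P) interior_of S \<longleftrightarrow> (\<exists>U. open U \<and> x \<in> U \<and> U \<inter> P \<subseteq> S \<and> x \<in> P)"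
proof
  assume "x \<in> (top_of_set P) interior_of S"
  then obtain T where T: "openin (top_of_set P) T" "x \<in> T" "T \<subseteq> S"
    unfolding interior_of_def by blast
  then obtain U where U: "open U" "T = P \<inter> U" unfolding openin_open by blast
  show "\<exists>U. open U \<and> x \<in> U \<and> U \<inter> P \<subseteq> S \<and> x \<in> P"
    using T U by blast
next
  assume "\<exists>U. open U \<and> x \<in> U \<and> U \<inter> P \<subseteq> S \<and> x \<in> P"
  then obtain U where U: "open U" "x \<in> U" "U \<inter> P \<subseteq> S" "x \<in> P" by blast
  have "openin (top_of_set P) (P \<inter> U)" unfolding openin_open using U(1) by blast
  moreover have "x \<in> P \<inter> U" "P \<inter> U \<subseteq> S" using U by auto
  ultimately show "x \<in> (top_of_set P) interior_of S" unfolding interior_of_def by blast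
qed

lemma main_ind:
  assumes M: "polyhedral_model P K V"
  shows "sem P V \<phi> \<subseteq> P \<and> (\<forall>\<sigma>\<in>K. \<forall>x\<in>rel_interior \<sigma>. \<forall>y\<in>rel_interior \<sigma>.
            x \<in> sem P V \<phi> \<longrightarrow> y \<in> sem P V \<phi>)"
proof -
  have K: "simplicial_complex K" and P: "P = \<Union>K"
    and Vp: "\<And>p. \<exists>C. C \<subseteq> cells K \<and> V p = \<Union>C"
    using M unfolding polyhedral_model_def by auto
  have simp: "\<And>\<sigma>. \<sigma> \<in> K \<Longrightarrow> is_simplex \<sigma>" using K unfolding simplicial_complex_def by blast
  have inP: "\<And>\<sigma> y. \<sigma> \<in> K \<Longrightarrow> y \<in> rel_interior \<sigma> \<Longrightarrow> y \<in> P"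
    using P rel_interior_subset by blast
  show ?thesis
  proof (induction \<phi>)
    case STop
    then show ?case using inP by auto
  next
    case (SAtom p)
    obtain C where C: "C \<subseteq> cells K" "V p = \<Union>C" using Vp by blast
    show ?case
    proof (intro conjI ballI impI)
      fix \<sigma> x y assume s: "\<sigma> \<in> K" and x: "x \<in> rel_interior \<sigma>" and y: "y \<in> rel_interior \<sigma>"
        and xs: "x \<in> sem P V (SAtom p)"
      then obtain c where c: "c \<in> C" "x \<in> c" using C by auto
      then obtain \<tau> where t: "\<tau> \<in> K" "\<tau> \<noteq> {}" "c = simplex_relint \<tau>"
        using C unfolding cells_def by blast
      then have ct: "c = rel_interior \<tau>" using relint_eq simp by blast
      have "\<sigma> \<subseteq> \<tau>" using face_sub[OF K s t(1) x] c ct rel_interior_subset by blast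
      moreover have "\<tau> \<subseteq> \<sigma>" using face_sub[OF K t(1) s, of x] c ct x rel_interior_subset by blast
      ultimately have "\<sigma> = \<tau>" by blast
      then show "y \<in> sem P V (SAtom p)" using y c ct C inP[OF s y] by auto
    qed auto
  next
    case (SNeg \<phi>)
    then show ?case using inP by auto
  next
    case (SAnd \<phi>1 \<phi>2)
    then show ?case by auto
  next
    case (SBox \<phi>)
    define S where "S = sem P V \<phi>"
    have SP: "S \<subseteq> P" and inv: "\<forall>\<sigma>\<in>K. \<forall>x\<in>rel_interior \<sigma>. \<forall>y\<in>rel_interior \<sigma>. x \<in> S \<longrightarrow> y \<in> S"
      using SBox unfolding S_def by auto
    have sub: "sem P V (SBox \<phi>) \<subseteq> P" using interior_of_top_iff by auto
    show ?case
    proof (intro conjI sub ballI impI)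
      fix \<sigma> x y assume s: "\<sigma> \<in> K" and x: "x \<in> rel_interior \<sigma>" and y: "y \<in> rel_interior \<sigma>"
        and xs: "x \<in> sem P V (SBox \<phi>)"
      have "x \<in> (top_of_set P) interior_of S" using xs unfolding S_def by simp
      then have "\<exists>U. open U \<and> x \<in> U \<and> U \<inter> P \<subseteq> S \<and> x \<in> P"
        by (simp only: interior_of_top_iff)
      then obtain U where U: "open U" "x \<in> U" "U \<inter> P \<subseteq> S" by blast
      define Uy where "Uy \<equiv> - \<Union>{\<tau>\<in>K. y \<notin> \<tau>}"
      have "Uy \<inter> P \<subseteq> S"
      proof
        fix z assume z: "z \<in> Uy \<inter> P"
        have "\<exists>\<tau>\<in>K. \<tau> \<noteq> {} \<and> z \<in> rel_interior \<tau> \<and> y \<in> \<tau>"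
          by (rule nbhd(3)[OF K P refl]) (use z in \<open>auto simp: Uy_def\<close>)
        then obtain \<tau> where t: "\<tau> \<in> K" "\<tau> \<noteq> {}" "z \<in> rel_interior \<tau>" "y \<in> \<tau>"
          by blast
        have "\<sigma> \<subseteq> \<tau>" using face_sub[OF K s t(1) y t(4)] .
        then have "x \<in> \<tau>" using x rel_interior_subset by blast
        then have "x \<in> closure (rel_interior \<tau>)"
          using convex_closure_rel_interior[OF simplex_props(1)[OF simp[OF t(1)]]]
            closure_subset by blast
        then have "U \<inter> rel_interior \<tau> \<noteq> {}" using U open_Int_closure_eq_empty[OF U(1)] by blast
        then obtain w where w: "w \<in> U" "w \<in> rel_interior \<tau>" by blast
        then have "w \<in> S" using U inP[OF t(1)] by blast
        then show "z \<in> S" using inv t w by blast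
      qed
      moreover have "open Uy" "y \<in> Uy" unfolding Uy_def by (rule nbhd[OF K P refl])+
      ultimately have "\<exists>U. open U \<and> y \<in> U \<and> U \<inter> P \<subseteq> S \<and> y \<in> P"
        using inP[OF s y] by blast
      then have "y \<in> (top_of_set P) interior_of S" by (simp only: interior_of_top_iff)
      then show "y \<in> sem P V (SBox \<phi>)" unfolding S_def by simp
    qed
  next
    case (SGamma \<phi> \<psi>)
    define A where "A = sem P V \<phi>"
    define B where "B = sem P V \<psi>"
    have inv: "\<forall>\<sigma>\<in>K. \<forall>x\<in>rel_interior \<sigma>. \<forall>y\<in>rel_interior \<sigma>. x \<in> A \<longrightarrow> y \<in> A"
      using SGamma unfolding A_def by auto
    show ?case
    proof (intro conjI ballI impI)
      show "sem P V (SGamma \<phi> \<psi>) \<subseteq> P" by auto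
      fix \<sigma> x y assume s: "\<sigma> \<in> K" and x: "x \<in> rel_interior \<sigma>" and y: "y \<in> rel_interior \<sigma>"
        and xs: "x \<in> sem P V (SGamma \<phi> \<psi>)"
      then obtain \<pi> where pi: "path \<pi>" "path_image \<pi> \<subseteq> P" "pathstart \<pi> = x"
        "\<pi> ` {0<..<1} \<subseteq> A" "pathfinish \<pi> \<in> B"
        unfolding A_def B_def by auto
      define Ux where "Ux \<equiv> - \<Union>{\<tau>\<in>K. x \<notin> \<tau>}"
      have Ux: "open Ux" "x \<in> Ux" unfolding Ux_def by (rule nbhd[OF K P refl])+
      then obtain e where e: "e > 0" "ball x e \<subseteq> Ux" using open_contains_ball by blast
      have "continuous_on {0..1} \<pi>" using pi(1) unfolding path_def .
      then obtain d where d: "d > 0" "\<forall>t\<in>{0..1}. dist t 0 < d \<longrightarrow> dist (\<pi> t) (\<pi> 0) < e"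
        using e(1) unfolding continuous_on_iff by (metis atLeastAtMost_iff order_refl zero_le_one)
      define t0 where "t0 = min (d/2) (1/2)"
      have t0: "0 < t0" "t0 < 1" "t0 \<le> 1" "0 \<le> t0" "dist t0 0 < d" using d(1) unfolding t0_def by auto
      have "dist (\<pi> t0) x < e" using d(2) t0 pi(3) unfolding pathstart_def by (simp add: dist_commute)
      then have "\<pi> t0 \<in> Ux" using e by (auto simp: dist_commute)
      moreover have "\<pi> t0 \<in> P" using pi(2) t0 unfolding path_image_def by auto
      ultimately have "\<exists>\<tau>\<in>K. \<tau> \<noteq> {} \<and> \<pi> t0 \<in> rel_interior \<tau> \<and> x \<in> \<tau>"
        unfolding Ux_def by (rule nbhd(3)[OF K P refl])
      then obtain \<tau> where t: "\<tau> \<in> K" "\<tau> \<noteq> {}" "\<pi> t0 \<in> rel_interior \<tau>" "x \<in> \<tau>"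
        by blast
      define z where "z = \<pi> t0"
      have zA: "z \<in> A" using pi(4) t0 unfolding z_def by auto
      have relA: "rel_interior \<tau> \<subseteq> A" using inv t zA unfolding z_def by blast
      have "\<sigma> \<subseteq> \<tau>" using face_sub[OF K s t(1) x t(4)] .
      then have yt: "y \<in> \<tau>" using y rel_interior_subset by blast
      have cvx: "convex \<tau>" and cl: "closed \<tau>" using simplex_props simp[OF t(1)] by auto
      define g where "g = linepath y z +++ subpath t0 1 \<pi>"
      have fs: "pathfinish (linepath y z) = pathstart (subpath t0 1 \<pi>)"
        unfolding z_def by simp
      have "path g" unfolding g_def using path_join[OF fs] pi(1) t0
        by (simp add: path_subpath)
      moreover have "path_image g \<subseteq> P"
      proof -
        have "closed_segment y z \<subseteq> \<tau>"
          using cvx yt t(3) rel_interior_subset closed_segment_subset unfolding z_def by blast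
        moreover have "path_image (subpath t0 1 \<pi>) \<subseteq> P"
          using path_image_subpath_subset[of t0 1 \<pi>] t0 pi(2) by auto
        ultimately show ?thesis unfolding g_def path_image_join[OF fs]
          using P t(1) by auto
      qed
      moreover have "pathstart g = y" unfolding g_def by simp
      moreover have "pathfinish g \<in> B" using pi(5) unfolding g_def pathfinish_join pathfinish_subpath by (simp add: pathfinish_def)
      moreover have "g ` {0<..<1} \<subseteq> A"
      proof
        fix w assume "w \<in> g ` {0<..<1}"
        then obtain r where r: "0 < r" "r < 1" "w = g r" by auto
        have zrel: "z \<in> rel_interior \<tau>" using t(3) unfolding z_def .
        show "w \<in> A"
        proof (cases "r \<le> 1/2")
          case True
          have ycl: "y \<in> closure \<tau>" using yt closure_subset by blast
          have "y - (2*r) *\<^sub>R (y - z) \<in> rel_interior \<tau>"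
            by (rule rel_interior_closure_convex_shrink[OF cvx zrel ycl]) (use r True in auto)
          moreover have "w = linepath y z (2*r)"
            using r(3) True unfolding g_def joinpaths_def by simp
          moreover have "linepath y z (2*r) = y - (2*r) *\<^sub>R (y - z)"
            unfolding linepath_def by (simp add: algebra_simps)
          ultimately show ?thesis using relA by auto
        next
          case False
          have "w = subpath t0 1 \<pi> (2*r - 1)"
            using r(3) False unfolding g_def joinpaths_def by simp
          then have w: "w = \<pi> ((1 - t0) * (2*r - 1) + t0)"
            unfolding subpath_def by simp
          have nn: "0 \<le> (1 - t0) * (2*r - 1)" using t0 False by (intro mult_nonneg_nonneg) auto
          have lt: "(1 - t0) * (2*r - 1) < (1 - t0) * 1" using t0 r by (intro mult_strict_left_mono) auto
          have lt2: "(1 - t0) * (2*r - 1) < 1 - t0" using lt by simp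
          have "(1 - t0) * (2*r - 1) + t0 \<in> {0<..<1}"
            unfolding greaterThanLessThan_iff using nn lt2 t0(1) by linarith
          then show ?thesis using pi(4) w by auto
        qed
      qed
      ultimately have "\<exists>\<pi>. path \<pi> \<and> path_image \<pi> \<subseteq> P \<and> pathstart \<pi> = y \<and>
              \<pi> ` {0<..<1} \<subseteq> A \<and> pathfinish \<pi> \<in> B" by blast
      then show "y \<in> sem P V (SGamma \<phi> \<psi>)"
        using inP[OF s y] unfolding A_def B_def by simp
    qed
  qed
qed

theorem mainTheorem2:
  fixes P :: "'a::euclidean_space set" and K :: "'a set set" and V :: "'p::finite \<Rightarrow> 'a set"
  assumes "polyhedral_model P K V"
  shows "(\<forall>c\<in>cells K. \<forall>x\<in>c. \<forall>y\<in>c. \<forall>\<phi>. x \<in> sem P V \<phi> \<longleftrightarrow> y \<in> sem P V \<phi>)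
       \<and> (\<forall>\<phi>. \<exists>C. C \<subseteq> cells K \<and> finite C \<and> sem P V \<phi> = \<Union>C)"
proof -
  have K: "simplicial_complex K" and P: "P = \<Union>K"
    using assms unfolding polyhedral_model_def by auto
  have simp: "\<And>\<sigma>. \<sigma> \<in> K \<Longrightarrow> is_simplex \<sigma>" using K unfolding simplicial_complex_def by blast
  have cellsK: "cells K = rel_interior ` {\<sigma>\<in>K. \<sigma> \<noteq> {}}"
    unfolding cells_def
  proof (intro equalityI subsetI)
    fix c assume "c \<in> {simplex_relint \<sigma> |\<sigma>. \<sigma> \<in> K \<and> \<sigma> \<noteq> {}}"
    then obtain \<sigma> where "\<sigma> \<in> K" "\<sigma> \<noteq> {}" "c = simplex_relint \<sigma>" by blast
    then have "c = rel_interior \<sigma>" using relint_eq[OF simp[OF \<open>\<sigma> \<in> K\<close>]] by simp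
    then show "c \<in> rel_interior ` {\<sigma>\<in>K. \<sigma> \<noteq> {}}" using \<open>\<sigma> \<in> K\<close> \<open>\<sigma> \<noteq> {}\<close> by blast
  next
    fix c assume "c \<in> rel_interior ` {\<sigma>\<in>K. \<sigma> \<noteq> {}}"
    then obtain \<sigma> where "\<sigma> \<in> K" "\<sigma> \<noteq> {}" "c = rel_interior \<sigma>" by blast
    then have "c = simplex_relint \<sigma>" using relint_eq[OF simp[OF \<open>\<sigma> \<in> K\<close>]] by simp
    then show "c \<in> {simplex_relint \<sigma> |\<sigma>. \<sigma> \<in> K \<and> \<sigma> \<noteq> {}}"
      using \<open>\<sigma> \<in> K\<close> \<open>\<sigma> \<noteq> {}\<close> by blast
  qed
  have "finite K" using K unfolding simplicial_complex_def by blast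
  then have fin: "finite (cells K)" unfolding cellsK by simp
  have A: "\<forall>c\<in>cells K. \<forall>x\<in>c. \<forall>y\<in>c. \<forall>\<phi>. x \<in> sem P V \<phi> \<longleftrightarrow> y \<in> sem P V \<phi>"
  proof (intro ballI allI)
    fix c x y \<phi> assume c: "c \<in> cells K" and x: "x \<in> c" and y: "y \<in> c"
    then obtain \<sigma> where s: "\<sigma> \<in> K" "c = rel_interior \<sigma>" unfolding cellsK by blast
    have inv: "\<forall>\<sigma>\<in>K. \<forall>x\<in>rel_interior \<sigma>. \<forall>y\<in>rel_interior \<sigma>.
            x \<in> sem P V \<phi> \<longrightarrow> y \<in> sem P V \<phi>" using main_ind[OF assms] by (rule conjunct2)
    show "x \<in> sem P V \<phi> \<longleftrightarrow> y \<in> sem P V \<phi>"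
      using inv s x y by blast
  qed
  have B: "\<exists>C. C \<subseteq> cells K \<and> finite C \<and> sem P V \<phi> = \<Union>C" for \<phi>
  proof (intro exI conjI)
    let ?C = "{c\<in>cells K. c \<subseteq> sem P V \<phi>}"
    show "?C \<subseteq> cells K" "finite ?C" using fin by auto
    show "sem P V \<phi> = \<Union>?C"
    proof
      show "\<Union>?C \<subseteq> sem P V \<phi>" by blast
      show "sem P V \<phi> \<subseteq> \<Union>?C"
      proof
        fix x assume x: "x \<in> sem P V \<phi>"
        then have "x \<in> P" using main_ind[OF assms, of \<phi>] by blast
        then obtain \<sigma> where "\<sigma> \<in> K" "x \<in> \<sigma>" using P by blast
        then obtain \<tau> where t: "\<tau> \<in> K" "\<tau> \<noteq> {}" "x \<in> rel_interior \<tau>" using cover[OF K] by blast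
        then have "rel_interior \<tau> \<in> cells K" unfolding cellsK by blast
        moreover have "rel_interior \<tau> \<subseteq> sem P V \<phi>"
        proof
          fix w assume "w \<in> rel_interior \<tau>"
          then show "w \<in> sem P V \<phi>" using A \<open>rel_interior \<tau> \<in> cells K\<close> t(3) x by blast
        qed
        ultimately show "x \<in> \<Union>?C" using t(3) by blast
      qed
    qed
  qed
  show ?thesis using A B by blast
qed

end
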